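(* Let $t_1,\dots,t_N\in[0,1]$ and consider the depolarizing channels $\Phi_{t_i}=t_i\,\mathrm{id}+(1-t_i)\Delta$ on $\mathcal L(\mathbb C^d)$, and let $K\le\min(N,D_d)$ be a positive integer. If there exists $S\subseteq[N]$ with $|S|=K$ and $\sum_{i\in S}t_i^2>1$, then $(\Phi_{t_1},\dots,\Phi_{t_N})$ is $(N,K)$-incompatible. If $\sum_{i\in S}t_i^2>1$ holds for every $S\subseteq[N]$ with $|S|=K$, then $(\Phi_{t_1},\dots,\Phi_{t_N})$ is $(N,K)$-strongly incompatible.
   Context: $\mathrm{id}(X)=X$, $\Delta(X)=(\operatorname{Tr}X)I/d$. $D_d$ is the maximal number of mutually unbiased orthonormal bases of $\mathbb C^d$ (bases $\mathbf e,\mathbf f$ unbiased if $|\langle e_i,f_j\rangle|=1/\sqrt d$). A family of channels is compatible if there is a channel into the tensor product of the output spaces whose marginals are the given channels. An $N$-tuple of channels is $(N,K)$-incompatible if at least one $K$-element subfamily is incompatible, and $(N,K)$-strongly incompatible if every $K$-element subfamily is incompatible. *)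

theory Defs
  imports Complex_Main "HOL-Library.FuncSet"
begin

text \<open>Operators on a finite-dimensional Hilbert space with orthonormal basis indexed
 by a finite set In are represented as matrices  'i => 'i => complex  (entries outside
 In x In are irrelevant).\<close>

type_synonym 'i op = "'i \<Rightarrow> 'i \<Rightarrow> complex"

definition tr :: "'i set \<Rightarrow> 'i op \<Rightarrow> complex" where
  "tr In A = (\<Sum>i\<in>In. A i i)"

definition psd :: "'i set \<Rightarrow> 'i op \<Rightarrow> bool" where
  "psd In A \<longleftrightarrow> (\<forall>i\<in>In. \<forall>j\<in>In. A j i = cnj (A i j)) \<and>
     (\<forall>v :: 'i \<Rightarrow> complex. 0 \<le> Re (\<Sum>i\<in>In. \<Sum>j\<in>In. cnj (v i) * A i j * v j))"

text \<open>Complete positivity: for every ancilla dimension n, Phi (x) id_n maps positive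
 operators on H_I (x) C^n to positive operators on H_O (x) C^n.\<close>
definition channel :: "'i set \<Rightarrow> 'o set \<Rightarrow> ('i op \<Rightarrow> 'o op) \<Rightarrow> bool" where
  "channel In Out \<Phi> \<longleftrightarrow>
     (\<forall>A B. (\<forall>i\<in>In. \<forall>i'\<in>In. A i i' = B i i') \<longrightarrow> (\<forall>p\<in>Out. \<forall>q\<in>Out. \<Phi> A p q = \<Phi> B p q)) \<and>
     (\<forall>A B. \<forall>p\<in>Out. \<forall>q\<in>Out. \<Phi> (\<lambda>i i'. A i i' + B i i') p q = \<Phi> A p q + \<Phi> B p q) \<and>
     (\<forall>c A. \<forall>p\<in>Out. \<forall>q\<in>Out. \<Phi> (\<lambda>i i'. c * A i i') p q = c * \<Phi> A p q) \<and>
     (\<forall>(n::nat) (X :: ('i \<times> nat) op).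
        psd (In \<times> {..<n}) X \<longrightarrow>
        psd (Out \<times> {..<n}) (\<lambda>(p,a) (q,a'). \<Phi> (\<lambda>i i'. X (i,a) (i',a')) p q)) \<and>
     (\<forall>A. tr Out (\<Phi> A) = tr In A)"

text \<open>Index set of the computational basis of the tensor product (C^d)^{(x) S}.\<close>
definition tens_idx :: "nat \<Rightarrow> nat set \<Rightarrow> (nat \<Rightarrow> nat) set" where
  "tens_idx d S = PiE S (\<lambda>_. {..<d})"

definition marginal :: "nat \<Rightarrow> nat set \<Rightarrow> nat \<Rightarrow> (nat \<Rightarrow> nat) op \<Rightarrow> nat op" where
  "marginal d S j Y = (\<lambda>p q. \<Sum>f\<in>tens_idx d (S - {j}). Y (f(j := p)) (f(j := q)))"

definition compatible :: "nat \<Rightarrow> nat set \<Rightarrow> (nat \<Rightarrow> nat op \<Rightarrow> nat op) \<Rightarrow> bool" where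
  "compatible d S \<Phi> \<longleftrightarrow>
     (\<exists>\<Psi>. channel {..<d} (tens_idx d S) \<Psi> \<and>
        (\<forall>j\<in>S. \<forall>A. \<forall>p<d. \<forall>q<d. marginal d S j (\<Psi> A) p q = \<Phi> j A p q))"

definition NK_incompatible :: "nat \<Rightarrow> nat \<Rightarrow> nat \<Rightarrow> (nat \<Rightarrow> nat op \<Rightarrow> nat op) \<Rightarrow> bool" where
  "NK_incompatible d N K \<Phi> \<longleftrightarrow> (\<exists>S. S \<subseteq> {1..N} \<and> card S = K \<and> \<not> compatible d S \<Phi>)"

definition NK_strongly_incompatible :: "nat \<Rightarrow> nat \<Rightarrow> nat \<Rightarrow> (nat \<Rightarrow> nat op \<Rightarrow> nat op) \<Rightarrow> bool" where
  "NK_strongly_incompatible d N K \<Phi> \<longleftrightarrow> (\<forall>S. S \<subseteq> {1..N} \<and> card S = K \<longrightarrow> \<not> compatible d S \<Phi>)"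

definition depol :: "nat \<Rightarrow> real \<Rightarrow> nat op \<Rightarrow> nat op" where
  "depol d t A = (\<lambda>p q. complex_of_real t * A p q +
      complex_of_real (1 - t) * (if p = q then tr {..<d} A / of_nat d else 0))"

definition inner_d :: "nat \<Rightarrow> (nat \<Rightarrow> complex) \<Rightarrow> (nat \<Rightarrow> complex) \<Rightarrow> complex" where
  "inner_d d u v = (\<Sum>k<d. cnj (u k) * v k)"

definition onb :: "nat \<Rightarrow> (nat \<Rightarrow> nat \<Rightarrow> complex) \<Rightarrow> bool" where
  "onb d e \<longleftrightarrow> (\<forall>i<d. \<forall>j<d. inner_d d (e i) (e j) = (if i = j then 1 else 0))"

definition unbiased :: "nat \<Rightarrow> (nat \<Rightarrow> nat \<Rightarrow> complex) \<Rightarrow> (nat \<Rightarrow> nat \<Rightarrow> complex) \<Rightarrow> bool" where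
  "unbiased d e f \<longleftrightarrow> (\<forall>i<d. \<forall>j<d. cmod (inner_d d (e i) (f j)) = 1 / sqrt (real d))"

definition mub_family :: "nat \<Rightarrow> nat \<Rightarrow> (nat \<Rightarrow> nat \<Rightarrow> nat \<Rightarrow> complex) \<Rightarrow> bool" where
  "mub_family d m B \<longleftrightarrow> (\<forall>k<m. onb d (B k)) \<and> (\<forall>k<m. \<forall>l<m. k \<noteq> l \<longrightarrow> unbiased d (B k) (B l))"

definition D :: "nat \<Rightarrow> nat" where
  "D d = (GREATEST m. \<exists>B. mub_family d m B)"

end

theory Submission
  imports Defs "HOL-Analysis.L2_Norm"
begin


definition ip :: "'a set \<Rightarrow> ('a \<Rightarrow> complex) \<Rightarrow> ('a \<Rightarrow> complex) \<Rightarrow> complex" where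
  "ip I x y = (\<Sum>i\<in>I. cnj (x i) * y i)"

lemma ip_self: "ip I x x = complex_of_real (\<Sum>i\<in>I. (cmod (x i))\<^sup>2)"
  unfolding ip_def of_real_sum by (intro sum.cong refl) (subst complex_norm_square, rule mult.commute)

lemma ip_self_Re: "Re (ip I x x) = (\<Sum>i\<in>I. (cmod (x i))\<^sup>2)"
  by (simp add: ip_self)

lemma ip_self_nonneg: "0 \<le> Re (ip I x x)"
  by (simp add: ip_self_Re sum_nonneg)

lemma ip_cnj: "cnj (ip I x y) = ip I y x"
  unfolding ip_def by (simp add: mult.commute)

lemma ip_CS: "cmod (ip I x y) \<le> sqrt (Re (ip I x x)) * sqrt (Re (ip I y y))"
proof -
  have "cmod (ip I x y) \<le> (\<Sum>i\<in>I. cmod (cnj (x i) * y i))"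
    unfolding ip_def by (rule norm_sum)
  also have "\<dots> = (\<Sum>i\<in>I. \<bar>cmod (x i)\<bar> * \<bar>cmod (y i)\<bar>)"
    by (simp add: norm_mult)
  also have "\<dots> \<le> L2_set (\<lambda>i. cmod (x i)) I * L2_set (\<lambda>i. cmod (y i)) I"
    by (rule L2_set_mult_ineq)
  also have "\<dots> = sqrt (Re (ip I x x)) * sqrt (Re (ip I y y))"
    by (simp add: L2_set_def ip_self_Re)
  finally show ?thesis .
qed

lemma ip_lin: "ip I (\<lambda>i. \<Sum>k\<in>F. a k * u k i) (\<lambda>i. \<Sum>l\<in>G. b l * v l i)
   = (\<Sum>k\<in>F. \<Sum>l\<in>G. cnj (a k) * b l * ip I (u k) (v l))"
proof -
  have "ip I (\<lambda>i. \<Sum>k\<in>F. a k * u k i) (\<lambda>i. \<Sum>l\<in>G. b l * v l i)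
     = (\<Sum>i\<in>I. \<Sum>k\<in>F. \<Sum>l\<in>G. cnj (a k) * b l * (cnj (u k i) * v l i))"
    unfolding ip_def by (simp add: sum_distrib_left sum_distrib_right mult_ac)
  also have "\<dots> = (\<Sum>k\<in>F. \<Sum>i\<in>I. \<Sum>l\<in>G. cnj (a k) * b l * (cnj (u k i) * v l i))"
    by (rule sum.swap)
  also have "\<dots> = (\<Sum>k\<in>F. \<Sum>l\<in>G. \<Sum>i\<in>I. cnj (a k) * b l * (cnj (u k i) * v l i))"
    by (simp add: sum.swap[of _ I])
  also have "\<dots> = (\<Sum>k\<in>F. \<Sum>l\<in>G. cnj (a k) * b l * ip I (u k) (v l))"
    unfolding ip_def by (simp add: sum_distrib_left)
  finally show ?thesis .
qed

lemma ip_lin_right: "ip I x (\<lambda>i. \<Sum>l\<in>G. b l * v l i) = (\<Sum>l\<in>G. b l * ip I x (v l))"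
  unfolding ip_def by (simp add: sum_distrib_left sum_distrib_right mult_ac sum.swap[of _ I])

lemma ip_diff: "ip I (\<lambda>i. x i - y i) (\<lambda>i. x i - y i) = ip I x x - ip I x y - ip I y x + ip I y y"
  unfolding ip_def by (simp add: algebra_simps sum.distrib sum_subtractf)

lemma bessel_eq:
  assumes c: "c > 0" and orth: "\<And>k l. k \<in> F \<Longrightarrow> l \<in> F \<Longrightarrow> ip I (u k) (u l) = (if k = l then complex_of_real c else 0)"
    and fin: "finite F"
  shows "ip I (\<lambda>i. x i - (\<Sum>k\<in>F. (ip I (u k) x / c) * u k i)) (\<lambda>i. x i - (\<Sum>k\<in>F. (ip I (u k) x / c) * u k i))
     = ip I x x - (\<Sum>k\<in>F. ip I (u k) x * cnj (ip I (u k) x)) / c"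
proof -
  let ?a = "\<lambda>k. ip I (u k) x / c"
  let ?y = "\<lambda>i. \<Sum>k\<in>F. ?a k * u k i"
  have yy: "ip I ?y ?y = (\<Sum>k\<in>F. ip I (u k) x * cnj (ip I (u k) x)) / c"
  proof -
    have "ip I ?y ?y = (\<Sum>k\<in>F. \<Sum>l\<in>F. cnj (?a k) * ?a l * ip I (u k) (u l))" by (rule ip_lin)
    also have "\<dots> = (\<Sum>k\<in>F. cnj (?a k) * ?a k * c)"
    proof (rule sum.cong[OF refl])
      fix k assume k: "k \<in> F"
      have "(\<Sum>l\<in>F. cnj (?a k) * ?a l * ip I (u k) (u l)) = (\<Sum>l\<in>F. if k = l then cnj (?a k) * ?a l * c else 0)"
        using k by (intro sum.cong refl) (simp add: orth)
      also have "\<dots> = cnj (?a k) * ?a k * c" using fin k by (simp add: sum.delta)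
      finally show "(\<Sum>l\<in>F. cnj (?a k) * ?a l * ip I (u k) (u l)) = cnj (?a k) * ?a k * c" .
    qed
    also have "\<dots> = (\<Sum>k\<in>F. ip I (u k) x * cnj (ip I (u k) x)) / c"
      using c by (simp add: sum_divide_distrib power2_eq_square field_simps)
    finally show ?thesis .
  qed
  have e: "\<And>k. ip I x (u k) = cnj (ip I (u k) x)" by (simp add: ip_cnj)
  have yx: "ip I ?y x = (\<Sum>k\<in>F. ip I (u k) x * cnj (ip I (u k) x)) / c"
  proof -
    have "ip I ?y x = cnj (ip I x ?y)" by (simp add: ip_cnj)
    also have "ip I x ?y = (\<Sum>k\<in>F. ?a k * ip I x (u k))" by (rule ip_lin_right)
    finally show ?thesis using c
      by (simp add: sum_divide_distrib e mult.commute)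
  qed
  have xy: "ip I x ?y = (\<Sum>k\<in>F. ip I (u k) x * cnj (ip I (u k) x)) / c"
  proof -
    have "ip I x ?y = (\<Sum>k\<in>F. ?a k * ip I x (u k))" by (rule ip_lin_right)
    then show ?thesis using c
      by (simp add: sum_divide_distrib e mult.commute)
  qed
  show ?thesis
    unfolding ip_diff[of I x ?y] yy yx xy by simp
qed



lemma ip_cmod_sum: "(\<Sum>k\<in>F. ip I (u k) x * cnj (ip I (u k) x)) = complex_of_real (\<Sum>k\<in>F. (cmod (ip I (u k) x))\<^sup>2)"
  unfolding of_real_sum by (intro sum.cong refl) (subst complex_norm_square, rule refl)

lemma bessel_ineq:
  assumes c: "c > 0" and orth: "\<And>k l. k \<in> F \<Longrightarrow> l \<in> F \<Longrightarrow> ip I (u k) (u l) = (if k = l then complex_of_real c else 0)"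
    and fin: "finite F"
  shows "(\<Sum>k\<in>F. (cmod (ip I (u k) x))\<^sup>2) \<le> c * Re (ip I x x)"
proof -
  note eq = bessel_eq[OF c orth fin, of x]
  have "0 \<le> Re (ip I x x - (\<Sum>k\<in>F. ip I (u k) x * cnj (ip I (u k) x)) / c)"
    by (subst eq[symmetric]) (assumption | rule ip_self_nonneg)+
  then have "0 \<le> Re (ip I x x) - (\<Sum>k\<in>F. (cmod (ip I (u k) x))\<^sup>2) / c"
    unfolding ip_cmod_sum by (simp add: Re_divide_of_real)
  then show ?thesis using c by (simp add: field_simps)
qed

lemma inner_d_ip: "inner_d d u v = ip {..<d} u v"
  unfolding inner_d_def ip_def by simp

lemma sum_le1_eq:
  fixes f :: "'a \<Rightarrow> real"
  assumes "finite A" "(\<Sum>p\<in>A. f p) = real (card A)" "\<And>p. p \<in> A \<Longrightarrow> f p \<le> 1" "p \<in> A"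
  shows "f p = 1"
proof -
  have "(\<Sum>p\<in>A. 1 - f p) = 0" using assms by (simp add: sum_subtractf)
  then have "\<forall>p\<in>A. 1 - f p = 0" using assms by (subst (asm) sum_nonneg_eq_0_iff) auto
  then show ?thesis using assms by auto
qed

lemma onb_complete:
  assumes onb: "onb d e" and pq: "p < d" "q < d"
  shows "(\<Sum>x<d. cnj (e x p) * e x q) = (if p = q then 1 else 0)"
proof -
  have orth: "\<And>k l. k \<in> {..<d} \<Longrightarrow> l \<in> {..<d} \<Longrightarrow> ip {..<d} (e k) (e l) = (if k = l then complex_of_real 1 else 0)"
    using onb unfolding onb_def inner_d_ip by auto
  define dl :: "nat \<Rightarrow> nat \<Rightarrow> complex" where "dl = (\<lambda>p i. if i = p then 1 else 0)"
  have ipd: "\<And>x p. p < d \<Longrightarrow> ip {..<d} (e x) (dl p) = cnj (e x p)"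
    unfolding ip_def dl_def by (simp add: if_distrib cong: if_cong)
  have dd: "Re (ip {..<d} (dl p) (dl p)) = 1" if p: "p < d" for p
  proof -
    have "(\<Sum>i<d. (cmod (dl p i))\<^sup>2) = (\<Sum>i<d. if i = p then 1 else 0)"
      by (intro sum.cong) (auto simp: dl_def)
    then show ?thesis using p by (simp add: ip_self_Re)
  qed
  have le1: "\<And>p. p \<in> {..<d} \<Longrightarrow> (\<Sum>x<d. (cmod (e x p))\<^sup>2) \<le> 1"
  proof -
    fix p assume p: "p \<in> {..<d}"
    have "(\<Sum>x<d. (cmod (ip {..<d} (e x) (dl p)))\<^sup>2) \<le> 1 * Re (ip {..<d} (dl p) (dl p))"
      by (rule bessel_ineq[OF _ orth]) auto
    then show "(\<Sum>x<d. (cmod (e x p))\<^sup>2) \<le> 1" using p by (simp add: ipd dd)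
  qed
  have tot: "(\<Sum>p<d. (\<Sum>x<d. (cmod (e x p))\<^sup>2)) = real (card {..<d})"
  proof -
    have "(\<Sum>p<d. (\<Sum>x<d. (cmod (e x p))\<^sup>2)) = (\<Sum>x<d. Re (ip {..<d} (e x) (e x)))"
      by (subst sum.swap) (simp add: ip_self_Re)
    also have "\<dots> = (\<Sum>x<d. 1)" using orth by (intro sum.cong refl) simp
    finally show ?thesis by simp
  qed
  have eq1: "(\<Sum>x<d. (cmod (e x p))\<^sup>2) = 1"
    using sum_le1_eq[OF _ tot le1] pq by simp
  let ?y = "\<lambda>i. dl p i - (\<Sum>k\<in>{..<d}. ip {..<d} (e k) (dl p) * e k i)"
  have "ip {..<d} ?y ?y = ip {..<d} (dl p) (dl p) - (\<Sum>k\<in>{..<d}. ip {..<d} (e k) (dl p) * cnj (ip {..<d} (e k) (dl p)))"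
    using bessel_eq[where c=1 and F="{..<d}" and I="{..<d}" and u=e and x="dl p", OF zero_less_one orth finite_lessThan] by simp
  also have "\<dots> = 0"
  proof -
    have "ip {..<d} (dl p) (dl p) = 1" using dd pq by (simp add: ip_self complex_eq_iff)
    moreover have "(\<Sum>k\<in>{..<d}. ip {..<d} (e k) (dl p) * cnj (ip {..<d} (e k) (dl p))) = 1"
      unfolding ip_cmod_sum using pq by (simp add: ipd eq1)
    ultimately show ?thesis by simp
  qed
  finally have "Re (ip {..<d} ?y ?y) = 0" by simp
  then have "\<forall>i\<in>{..<d}. (cmod (?y i))\<^sup>2 = 0"
    unfolding ip_self_Re by (subst (asm) sum_nonneg_eq_0_iff) auto
  then have "?y q = 0" using pq by auto
  then have "dl p q = (\<Sum>k<d. cnj (e k p) * e k q)" using pq by (simp add: ipd)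
  then show ?thesis by (simp add: dl_def eq_commute)
qed



definition nrm2 :: "nat \<Rightarrow> (nat \<Rightarrow> complex) \<Rightarrow> real" where
  "nrm2 d u = (\<Sum>k<d. (cmod (u k))\<^sup>2)"

definition xm :: "nat \<Rightarrow> (nat \<Rightarrow> complex) \<Rightarrow> nat op" where
  "xm d u = (\<lambda>p q. u p * cnj (u q) - (if p = q then complex_of_real (nrm2 d u / real d) else 0))"

definition qf :: "'i set \<Rightarrow> ('i \<Rightarrow> complex) \<Rightarrow> 'i op \<Rightarrow> complex" where
  "qf I v A = (\<Sum>i\<in>I. \<Sum>j\<in>I. cnj (v i) * A i j * v j)"

definition ip2 :: "nat \<Rightarrow> nat op \<Rightarrow> nat op \<Rightarrow> complex" where
  "ip2 d A B = ip ({..<d} \<times> {..<d}) (\<lambda>(p,q). A p q) (\<lambda>(p,q). B p q)"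

lemma ip2_eq: "ip2 d A B = (\<Sum>p<d. \<Sum>q<d. cnj (A p q) * B p q)"
  unfolding ip2_def ip_def sum.cartesian_product by (intro sum.cong refl) (auto split: prod.splits)

lemma nrm2_sum: "(\<Sum>k<d. u k * cnj (u k)) = complex_of_real (nrm2 d u)"
  unfolding nrm2_def of_real_sum by (intro sum.cong refl) (subst complex_norm_square, rule refl)

lemma nrm2_sum': "(\<Sum>k<d. cnj (u k) * u k) = complex_of_real (nrm2 d u)"
  by (subst nrm2_sum[symmetric]) (simp add: mult.commute)

lemma tr_xm: "d > 0 \<Longrightarrow> tr {..<d} (xm d u) = 0"
  unfolding tr_def xm_def by (simp add: sum_subtractf nrm2_sum)

lemma xm_herm: "cnj (xm d u q p) = xm d u p q"
  unfolding xm_def by auto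

lemma qf_diff: "qf I v (\<lambda>p q. A p q - B p q) = qf I v A - qf I v B"
  unfolding qf_def by (simp add: algebra_simps sum_subtractf)

lemma qf_diag: "qf {..<d} v (\<lambda>p q. if p = q then a else 0) = a * complex_of_real (nrm2 d v)"
proof -
  have "qf {..<d} v (\<lambda>p q. if p = q then a else 0) = (\<Sum>i<d. a * (cnj (v i) * v i))"
    unfolding qf_def
  proof (intro sum.cong refl)
    fix i assume i: "i \<in> {..<d}"
    have "(\<Sum>j<d. cnj (v i) * (if i = j then a else 0) * v j) = (\<Sum>j<d. if i = j then a * (cnj (v i) * v i) else 0)"
      by (intro sum.cong refl) auto
    also have "\<dots> = a * (cnj (v i) * v i)" using i by simp
    finally show "(\<Sum>j<d. cnj (v i) * (if i = j then a else 0) * v j) = a * (cnj (v i) * v i)" .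
  qed
  also have "\<dots> = a * complex_of_real (nrm2 d v)" by (simp add: sum_distrib_left[symmetric] nrm2_sum')
  finally show ?thesis .
qed

lemma qf_rank1: "qf {..<d} v (\<lambda>p q. w p * cnj (w q)) = cnj (inner_d d w v) * inner_d d w v"
  unfolding qf_def inner_d_def by (simp add: sum_product mult_ac) (rule sum.swap)

lemma qf_xm: "qf {..<d} v (xm d w) = complex_of_real ((cmod (inner_d d w v))\<^sup>2 - nrm2 d w * nrm2 d v / real d)"
proof -
  have "qf {..<d} v (xm d w) = cnj (inner_d d w v) * inner_d d w v - complex_of_real (nrm2 d w / real d) * complex_of_real (nrm2 d v)"
    unfolding xm_def qf_diff qf_rank1 qf_diag ..
  also have "cnj (inner_d d w v) * inner_d d w v = complex_of_real ((cmod (inner_d d w v))\<^sup>2)"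
    by (subst complex_norm_square) (simp add: mult.commute)
  finally show ?thesis by simp
qed

lemma ip2_herm: "(\<And>p q. cnj (X p q) = X q p) \<Longrightarrow> ip2 d X Y = qf {..<d} (\<lambda>_. 1) (\<lambda>p q. X q p * Y p q)"
  unfolding ip2_eq qf_def by simp

lemma ip2_xm_left: "ip2 d (xm d v) Y = qf {..<d} v Y - complex_of_real (nrm2 d v / real d) * tr {..<d} Y"
proof -
  have "ip2 d (xm d v) Y = (\<Sum>p<d. \<Sum>q<d. cnj (v p) * Y p q * v q - (if p = q then complex_of_real (nrm2 d v / real d) * Y p q else 0))"
    unfolding ip2_eq xm_def by (intro sum.cong refl) (auto simp: algebra_simps)
  also have "\<dots> = (\<Sum>p<d. \<Sum>q<d. cnj (v p) * Y p q * v q) - (\<Sum>p<d. \<Sum>q<d. if p = q then complex_of_real (nrm2 d v / real d) * Y p q else 0)"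
    by (simp add: sum_subtractf)
  also have "(\<Sum>p<d. \<Sum>q<d. if p = q then complex_of_real (nrm2 d v / real d) * Y p q else 0)
     = complex_of_real (nrm2 d v / real d) * tr {..<d} Y"
    unfolding tr_def by (simp add: sum_distrib_left)
  finally show ?thesis unfolding qf_def by simp
qed

lemma ip2_xm: "d > 0 \<Longrightarrow> ip2 d (xm d v) (xm d w) = complex_of_real ((cmod (inner_d d w v))\<^sup>2 - nrm2 d w * nrm2 d v / real d)"
  by (simp add: ip2_xm_left tr_xm qf_xm)

lemma ip2_lin: "ip2 d (\<lambda>p q. \<Sum>k\<in>F. a k * U k p q) (\<lambda>p q. \<Sum>l\<in>G. b l * V l p q)
   = (\<Sum>k\<in>F. \<Sum>l\<in>G. cnj (a k) * b l * ip2 d (U k) (V l))"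
proof -
  have e1: "(\<lambda>(p,q). \<Sum>k\<in>F. a k * U k p q) = (\<lambda>i. \<Sum>k\<in>F. a k * (\<lambda>(p,q). U k p q) i)" by auto
  have e2: "(\<lambda>(p,q). \<Sum>l\<in>G. b l * V l p q) = (\<lambda>i. \<Sum>l\<in>G. b l * (\<lambda>(p,q). V l p q) i)" by auto
  show ?thesis unfolding ip2_def e1 e2 by (rule ip_lin)
qed

lemma qf_lin: "qf I v (\<lambda>p q. \<Sum>j\<in>F. a j * A j p q) = (\<Sum>j\<in>F. a j * qf I v (A j))"
  unfolding qf_def by (simp add: sum_distrib_left sum_distrib_right mult_ac sum.swap[of _ F])

lemma onb_nrm2: "onb d e \<Longrightarrow> x < d \<Longrightarrow> nrm2 d (e x) = 1"
  unfolding onb_def inner_d_def using nrm2_sum'[where d=d and u="e x"] by auto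



lemma ip_delta: "finite I \<Longrightarrow> i0 \<in> I \<Longrightarrow> ip I u (\<lambda>i. if i = i0 then 1 else 0) = cnj (u i0)"
proof -
  assume f: "finite I" and i0: "i0 \<in> I"
  have "ip I u (\<lambda>i. if i = i0 then 1 else 0) = (\<Sum>i\<in>I. if i = i0 then cnj (u i0) else 0)"
    unfolding ip_def by (intro sum.cong refl) auto
  also have "\<dots> = cnj (u i0)" using f i0 by (simp add: sum.delta')
  finally show ?thesis .
qed

lemma mub_bound:
  assumes d: "d \<ge> 2" and mub: "mub_family d m B"
  shows "m \<le> d * d"
proof -
  define c where "c = 1 - 1 / real d"
  have c: "c > 0" unfolding c_def using d by (simp add: field_simps)
  define U where "U = (\<lambda>k. xm d (B k 0))"
  define I where "I = {..<d} \<times> {..<d}"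
  define cu where "cu = (\<lambda>k. (\<lambda>(p,q). U k p q))"
  have d0: "0 < d" using d by simp
  have onbk: "\<And>k. k < m \<Longrightarrow> onb d (B k)" using mub unfolding mub_family_def by auto
  have nr: "\<And>k. k < m \<Longrightarrow> nrm2 d (B k 0) = 1" using onbk onb_nrm2 d0 by blast
  have orth: "ip I (cu k) (cu l) = (if k = l then complex_of_real c else 0)" if k: "k \<in> {..<m}" and l: "l \<in> {..<m}" for k l
  proof -
    have "ip I (cu k) (cu l) = ip2 d (U k) (U l)" unfolding ip2_def I_def cu_def ..
    also have "\<dots> = complex_of_real ((cmod (inner_d d (B l 0) (B k 0)))\<^sup>2 - 1 / real d)"
      unfolding U_def using ip2_xm[OF d0] nr k l by simp
    also have "\<dots> = (if k = l then complex_of_real c else 0)"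
    proof (cases "k = l")
      case True
      then have "inner_d d (B l 0) (B k 0) = 1" using onbk[of k] k d0 unfolding onb_def by auto
      then show ?thesis using True by (simp add: c_def)
    next
      case False
      then have "cmod (inner_d d (B l 0) (B k 0)) = 1 / sqrt (real d)"
        using mub k l d0 unfolding mub_family_def unbiased_def by auto
      then show ?thesis using False d0 by (simp add: power_divide)
    qed
    finally show ?thesis .
  qed
  have finI: "finite I" unfolding I_def by simp
  have bes: "(\<Sum>k<m. (cmod (U k p q))\<^sup>2) \<le> c" if pq: "(p,q) \<in> I" for p q
  proof -
    let ?E = "\<lambda>i. if i = (p,q) then (1::complex) else 0"
    have "(\<Sum>k\<in>{..<m}. (cmod (ip I (cu k) ?E))\<^sup>2) \<le> c * Re (ip I ?E ?E)"
      by (rule bessel_ineq[OF c orth]) auto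
    moreover have "ip I (cu k) ?E = cnj (U k p q)" for k using ip_delta[OF finI pq] unfolding cu_def by simp
    moreover have "ip I ?E ?E = 1" using ip_delta[OF finI pq, of ?E] by simp
    ultimately show ?thesis by simp
  qed
  have "real m * c = (\<Sum>k<m. Re (ip I (cu k) (cu k)))" using orth by simp
  also have "\<dots> = (\<Sum>k<m. \<Sum>i\<in>I. (cmod (cu k i))\<^sup>2)" by (simp add: ip_self_Re)
  also have "\<dots> = (\<Sum>i\<in>I. \<Sum>k<m. (cmod (cu k i))\<^sup>2)" by (rule sum.swap)
  also have "\<dots> \<le> (\<Sum>i\<in>I. c)"
    by (rule sum_mono) (auto simp: cu_def intro!: bes)
  also have "\<dots> = real (d * d) * c" unfolding I_def by simp
  finally have "real m * c \<le> real (d * d) * c" .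
  then have "real m \<le> real (d * d)" using c by simp
  then show ?thesis by linarith
qed

lemma mub_mono: "mub_family d m B \<Longrightarrow> k \<le> m \<Longrightarrow> mub_family d k B"
  unfolding mub_family_def by auto

lemma mub_exists:
  assumes d: "d \<ge> 2" and K: "K \<le> D d"
  shows "\<exists>B. mub_family d K B"
proof -
  have P0: "\<exists>B. mub_family d 0 B" unfolding mub_family_def by simp
  have "\<exists>B. mub_family d (D d) B"
    unfolding D_def by (rule GreatestI_nat[where P="\<lambda>m. \<exists>B. mub_family d m B" and k=0 and b="d*d", OF P0]) (use mub_bound[OF d] in blast)
  then show ?thesis using mub_mono K by blast
qed



lemma sum_PiE_insert:
  assumes j: "j \<notin> S'" and fS: "finite S'" and fA: "finite A"
  shows "(\<Sum>a\<in>PiE (insert j S') (\<lambda>_. A). F a) = (\<Sum>x\<in>A. \<Sum>h\<in>PiE S' (\<lambda>_. A). F (h(j:=x)))"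
proof -
  have "(\<Sum>a\<in>PiE (insert j S') (\<lambda>_. A). F a) = (\<Sum>a\<in>(\<lambda>(y, g). g(j := y)) ` (A \<times> PiE S' (\<lambda>_. A)). F a)"
    by (simp add: PiE_insert_eq)
  also have "\<dots> = (\<Sum>z\<in>A \<times> PiE S' (\<lambda>_. A). F ((\<lambda>(y, g). g(j := y)) z))"
    by (rule sum.reindex[unfolded comp_def]) (rule inj_combinator[OF j, where T="\<lambda>_. A", simplified])
  also have "\<dots> = (\<Sum>x\<in>A. \<Sum>h\<in>PiE S' (\<lambda>_. A). F (h(j:=x)))"
    unfolding sum.cartesian_product by (intro sum.cong refl) (auto split: prod.splits)
  finally show ?thesis .
qed

definition phi :: "nat set \<Rightarrow> (nat \<Rightarrow> nat \<Rightarrow> nat \<Rightarrow> complex) \<Rightarrow> (nat \<Rightarrow> nat) \<Rightarrow> (nat \<Rightarrow> nat) \<Rightarrow> complex" where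
  "phi S bb a f = (\<Prod>k\<in>S. bb k (a k) (f k))"

lemma prod_complete:
  assumes fS: "finite S" and onbS: "\<And>k. k \<in> S \<Longrightarrow> onb d (bb k)"
    and fg: "\<And>k. k \<in> S \<Longrightarrow> f k < d \<and> g k < d"
  shows "(\<Sum>a\<in>tens_idx d S. cnj (phi S bb a f) * phi S bb a g) = (if \<forall>k\<in>S. f k = g k then 1 else 0)"
proof -
  have "(\<Sum>a\<in>tens_idx d S. cnj (phi S bb a f) * phi S bb a g)
      = (\<Sum>a\<in>PiE S (\<lambda>_. {..<d}). \<Prod>k\<in>S. cnj (bb k (a k) (f k)) * bb k (a k) (g k))"
    unfolding tens_idx_def phi_def by (simp add: prod.distrib)
  also have "\<dots> = (\<Prod>k\<in>S. \<Sum>x\<in>{..<d}. cnj (bb k x (f k)) * bb k x (g k))"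
    by (rule prod_sum_PiE[symmetric]) (use fS in auto)
  also have "\<dots> = (\<Prod>k\<in>S. if f k = g k then 1 else 0)"
    by (intro prod.cong refl) (use onb_complete onbS fg in auto)
  also have "\<dots> = (if \<forall>k\<in>S. f k = g k then 1 else 0)"
    using fS by (auto simp: prod_zero_iff)
  finally show ?thesis .
qed

lemma tens_idx_lt: "f \<in> tens_idx d S \<Longrightarrow> k \<in> S \<Longrightarrow> f k < d"
  unfolding tens_idx_def by auto

lemma prod_complete_TI:
  assumes fS: "finite S" and onbS: "\<And>k. k \<in> S \<Longrightarrow> onb d (bb k)"
    and fg: "f \<in> tens_idx d S" "g \<in> tens_idx d S"
  shows "(\<Sum>a\<in>tens_idx d S. cnj (phi S bb a f) * phi S bb a g) = (if f = g then 1 else 0)"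
proof -
  have "(\<forall>k\<in>S. f k = g k) \<longleftrightarrow> f = g"
    using fg unfolding tens_idx_def by (auto intro: PiE_ext)
  moreover have "(\<Sum>a\<in>tens_idx d S. cnj (phi S bb a f) * phi S bb a g) = (if \<forall>k\<in>S. f k = g k then 1 else 0)"
    by (rule prod_complete[OF fS onbS]) (use fg tens_idx_lt in auto)
  ultimately show ?thesis by simp
qed

lemma qf_trace:
  assumes fS: "finite S" and onbS: "\<And>k. k \<in> S \<Longrightarrow> onb d (bb k)"
  shows "(\<Sum>a\<in>tens_idx d S. qf (tens_idx d S) (phi S bb a) Y) = tr (tens_idx d S) Y"
proof -
  let ?T = "tens_idx d S"
  have fT: "finite ?T" unfolding tens_idx_def using fS by (simp add: finite_PiE)
  have "(\<Sum>a\<in>?T. qf ?T (phi S bb a) Y) = (\<Sum>a\<in>?T. \<Sum>f\<in>?T. \<Sum>g\<in>?T. Y f g * (cnj (phi S bb a f) * phi S bb a g))"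
    unfolding qf_def by (simp add: mult_ac)
  also have "\<dots> = (\<Sum>f\<in>?T. \<Sum>a\<in>?T. \<Sum>g\<in>?T. Y f g * (cnj (phi S bb a f) * phi S bb a g))"
    by (rule sum.swap)
  also have "\<dots> = (\<Sum>f\<in>?T. \<Sum>g\<in>?T. \<Sum>a\<in>?T. Y f g * (cnj (phi S bb a f) * phi S bb a g))"
    by (rule sum.cong[OF refl]) (rule sum.swap)
  also have "\<dots> = (\<Sum>f\<in>?T. \<Sum>g\<in>?T. Y f g * (if f = g then 1 else 0))"
    by (intro sum.cong refl) (simp add: sum_distrib_left[symmetric] prod_complete_TI[OF fS onbS])
  also have "\<dots> = (\<Sum>f\<in>?T. \<Sum>g\<in>?T. if g = f then Y f f else 0)"
    by (intro sum.cong refl) auto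
  also have "\<dots> = (\<Sum>f\<in>?T. Y f f)"
    using fT by simp
  finally show ?thesis unfolding tr_def .
qed



lemma phi_upd:
  assumes fS: "finite S'" and j: "j \<notin> S'"
  shows "phi (insert j S') bb (h(j:=x)) f = bb j x (f j) * phi S' bb h f"
proof -
  have "phi (insert j S') bb (h(j:=x)) f = bb j x (f j) * (\<Prod>k\<in>S'. bb k ((h(j:=x)) k) (f k))"
    unfolding phi_def using fS j by (simp add: prod.insert)
  also have "(\<Prod>k\<in>S'. bb k ((h(j:=x)) k) (f k)) = phi S' bb h f"
    unfolding phi_def using j by (intro prod.cong refl) auto
  finally show ?thesis .
qed

lemma qf_marg:
  assumes fS: "finite S" and onbS: "\<And>k. k \<in> S \<Longrightarrow> onb d (bb k)" and j: "j \<in> S"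
  shows "(\<Sum>a\<in>tens_idx d S. qf (tens_idx d S) (phi S bb a) (Y (a j)))
       = (\<Sum>x<d. qf {..<d} (bb j x) (marginal d S j (Y x)))"
proof -
  define S' where "S' = S - {j}"
  have SS: "S = insert j S'" unfolding S'_def using j by auto
  have jS: "j \<notin> S'" unfolding S'_def by simp
  have fS': "finite S'" unfolding S'_def using fS by simp
  have onbS': "\<And>k. k \<in> S' \<Longrightarrow> onb d (bb k)" using onbS unfolding S'_def by auto
  let ?T = "tens_idx d S"
  let ?T' = "tens_idx d S'"
  have TT: "?T = PiE (insert j S') (\<lambda>_. {..<d})" unfolding tens_idx_def SS ..
  have T'd: "?T' = PiE S' (\<lambda>_. {..<d})" unfolding tens_idx_def ..
  have fT: "finite ?T" unfolding tens_idx_def using fS by (simp add: finite_PiE)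
  define G where "G = (\<lambda>f g. \<Sum>x<d. cnj (bb j x (f j)) * Y x f g * bb j x (g j))"
  have "(\<Sum>a\<in>?T. qf ?T (phi S bb a) (Y (a j))) = (\<Sum>a\<in>?T. \<Sum>f\<in>?T. \<Sum>g\<in>?T. cnj (phi S bb a f) * Y (a j) f g * phi S bb a g)"
    unfolding qf_def ..
  also have "\<dots> = (\<Sum>f\<in>?T. \<Sum>a\<in>?T. \<Sum>g\<in>?T. cnj (phi S bb a f) * Y (a j) f g * phi S bb a g)"
    by (rule sum.swap)
  also have "\<dots> = (\<Sum>f\<in>?T. \<Sum>g\<in>?T. \<Sum>a\<in>?T. cnj (phi S bb a f) * Y (a j) f g * phi S bb a g)"
    by (rule sum.cong[OF refl]) (rule sum.swap)
  also have "\<dots> = (\<Sum>f\<in>?T. \<Sum>g\<in>?T. if \<forall>k\<in>S'. f k = g k then G f g else 0)"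
  proof (intro sum.cong refl)
    fix f g assume f: "f \<in> ?T" and g: "g \<in> ?T"
    have "(\<Sum>a\<in>?T. cnj (phi S bb a f) * Y (a j) f g * phi S bb a g)
       = (\<Sum>x<d. \<Sum>h\<in>?T'. cnj (phi S bb (h(j:=x)) f) * Y ((h(j:=x)) j) f g * phi S bb (h(j:=x)) g)"
      unfolding TT T'd by (rule sum_PiE_insert[OF jS fS']) simp
    also have "\<dots> = (\<Sum>x<d. \<Sum>h\<in>?T'. (cnj (bb j x (f j)) * Y x f g * bb j x (g j)) * (cnj (phi S' bb h f) * phi S' bb h g))"
      unfolding SS phi_upd[OF fS' jS] by (intro sum.cong refl) (simp add: mult_ac)
    also have "\<dots> = (\<Sum>x<d. (cnj (bb j x (f j)) * Y x f g * bb j x (g j)) * (\<Sum>h\<in>?T'. cnj (phi S' bb h f) * phi S' bb h g))"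
      by (simp add: sum_distrib_left)
    also have "(\<Sum>h\<in>?T'. cnj (phi S' bb h f) * phi S' bb h g) = (if \<forall>k\<in>S'. f k = g k then 1 else 0)"
      by (rule prod_complete[OF fS' onbS']) (use f g tens_idx_lt SS in auto)
    finally show "(\<Sum>a\<in>?T. cnj (phi S bb a f) * Y (a j) f g * phi S bb a g) = (if \<forall>k\<in>S'. f k = g k then G f g else 0)"
      unfolding G_def by (simp add: sum_distrib_right[symmetric])
  qed
  also have "\<dots> = (\<Sum>p<d. \<Sum>h1\<in>?T'. \<Sum>q<d. \<Sum>h2\<in>?T'.
        if \<forall>k\<in>S'. (h1(j:=p)) k = (h2(j:=q)) k then G (h1(j:=p)) (h2(j:=q)) else 0)"
    unfolding TT T'd sum_PiE_insert[OF jS fS' finite_lessThan] ..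
  also have "\<dots> = (\<Sum>p<d. \<Sum>h1\<in>?T'. \<Sum>q<d. G (h1(j:=p)) (h1(j:=q)))"
  proof (intro sum.cong refl)
    fix p h1 q assume h1: "h1 \<in> ?T'"
    have "(\<Sum>h2\<in>?T'. if \<forall>k\<in>S'. (h1(j:=p)) k = (h2(j:=q)) k then G (h1(j:=p)) (h2(j:=q)) else 0)
        = (\<Sum>h2\<in>?T'. if h1 = h2 then G (h1(j:=p)) (h1(j:=q)) else 0)"
    proof (intro sum.cong refl)
      fix h2 assume h2: "h2 \<in> ?T'"
      have "(\<forall>k\<in>S'. (h1(j:=p)) k = (h2(j:=q)) k) \<longleftrightarrow> h1 = h2"
        using h1 h2 jS unfolding T'd by (auto intro: PiE_ext)
      then show "(if \<forall>k\<in>S'. (h1(j:=p)) k = (h2(j:=q)) k then G (h1(j:=p)) (h2(j:=q)) else 0)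
        = (if h1 = h2 then G (h1(j:=p)) (h1(j:=q)) else 0)" by auto
    qed
    also have "\<dots> = G (h1(j:=p)) (h1(j:=q))"
      using h1 fS' unfolding T'd by (simp add: finite_PiE)
    finally show "(\<Sum>h2\<in>?T'. if \<forall>k\<in>S'. (h1(j:=p)) k = (h2(j:=q)) k then G (h1(j:=p)) (h2(j:=q)) else 0)
        = G (h1(j:=p)) (h1(j:=q))" .
  qed
  also have "\<dots> = (\<Sum>p<d. \<Sum>q<d. \<Sum>h\<in>?T'. G (h(j:=p)) (h(j:=q)))"
    by (rule sum.cong[OF refl]) (rule sum.swap)
  also have "\<dots> = (\<Sum>p<d. \<Sum>q<d. \<Sum>x<d. cnj (bb j x p) * marginal d S j (Y x) p q * bb j x q)"
  proof (intro sum.cong refl)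
    fix p q
    have "(\<Sum>h\<in>?T'. G (h(j:=p)) (h(j:=q))) = (\<Sum>h\<in>?T'. \<Sum>x<d. cnj (bb j x p) * Y x (h(j:=p)) (h(j:=q)) * bb j x q)"
      unfolding G_def by simp
    also have "\<dots> = (\<Sum>x<d. \<Sum>h\<in>?T'. cnj (bb j x p) * Y x (h(j:=p)) (h(j:=q)) * bb j x q)"
      by (rule sum.swap)
    also have "\<dots> = (\<Sum>x<d. cnj (bb j x p) * marginal d S j (Y x) p q * bb j x q)"
      unfolding marginal_def S'_def by (simp add: sum_distrib_left sum_distrib_right)
    finally show "(\<Sum>h\<in>?T'. G (h(j:=p)) (h(j:=q))) = (\<Sum>x<d. cnj (bb j x p) * marginal d S j (Y x) p q * bb j x q)" .
  qed
  also have "\<dots> = (\<Sum>p<d. \<Sum>x<d. \<Sum>q<d. cnj (bb j x p) * marginal d S j (Y x) p q * bb j x q)"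
    by (rule sum.cong[OF refl]) (rule sum.swap)
  also have "\<dots> = (\<Sum>x<d. \<Sum>p<d. \<Sum>q<d. cnj (bb j x p) * marginal d S j (Y x) p q * bb j x q)"
    by (rule sum.swap)
  also have "\<dots> = (\<Sum>x<d. qf {..<d} (bb j x) (marginal d S j (Y x)))"
    unfolding qf_def ..
  finally show ?thesis .
qed



lemma qf_cong: "(\<And>f g. f \<in> I \<Longrightarrow> g \<in> I \<Longrightarrow> A f g = B f g) \<Longrightarrow> qf I w A = qf I w B"
  unfolding qf_def by (intro sum.cong refl) auto

lemma qf_smul: "qf I v (\<lambda>p q. c * A p q) = c * qf I v A"
  unfolding qf_def by (simp add: sum_distrib_left mult_ac)

lemma sum_times_one: "(\<Sum>x\<in>A \<times> {..<Suc 0}. F x) = (\<Sum>i\<in>A. F (i, 0))"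
proof -
  have "(\<Sum>x\<in>A \<times> {..<Suc 0}. F x) = (\<Sum>(i,b)\<in>A \<times> {..<Suc 0}. F (i,b))" by simp
  also have "\<dots> = (\<Sum>i\<in>A. \<Sum>b\<in>{..<Suc 0}. F (i,b))" by (rule sum.cartesian_product[symmetric])
  finally show ?thesis by simp
qed

lemma psd_lift:
  assumes "psd I M"
  shows "psd (I \<times> {..<Suc 0}) (\<lambda>(i, a) (i', a'). M i i')"
proof -
  have hq: "(\<forall>i\<in>I. \<forall>j\<in>I. M j i = cnj (M i j)) \<and> (\<forall>v :: _ \<Rightarrow> complex. 0 \<le> Re (\<Sum>i\<in>I. \<Sum>j\<in>I. cnj (v i) * M i j * v j))"
    using assms unfolding psd_def .
  have h: "\<forall>i\<in>I. \<forall>j\<in>I. M j i = cnj (M i j)" using hq by (rule conjunct1)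
  have q: "0 \<le> Re (\<Sum>i\<in>I. \<Sum>j\<in>I. cnj (v i) * M i j * v j)" for v by (rule spec[OF conjunct2[OF hq]])
  have herm: "\<forall>x\<in>I \<times> {..<Suc 0}. \<forall>y\<in>I \<times> {..<Suc 0}. (\<lambda>(i, a) (i', a'). M i i') y x = cnj ((\<lambda>(i, a) (i', a'). M i i') x y)"
  proof (intro ballI)
    fix x y assume x: "x \<in> I \<times> {..<Suc 0}" and y: "y \<in> I \<times> {..<Suc 0}"
    obtain i a where xi: "x = (i, a)" by (cases x)
    obtain j b where yj: "y = (j, b)" by (cases y)
    have "i \<in> I" "j \<in> I" using x y xi yj by auto
    then have "M j i = cnj (M i j)" by (rule h[rule_format])
    then show "(\<lambda>(i, a) (i', a'). M i i') y x = cnj ((\<lambda>(i, a) (i', a'). M i i') x y)"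
      unfolding xi yj by simp
  qed
  have qq: "0 \<le> Re (\<Sum>x\<in>I \<times> {..<Suc 0}. \<Sum>y\<in>I \<times> {..<Suc 0}. cnj (v x) * (\<lambda>(i, a) (i', a'). M i i') x y * v y)" for v
  proof -
    have "(\<Sum>x\<in>I \<times> {..<Suc 0}. \<Sum>y\<in>I \<times> {..<Suc 0}. cnj (v x) * (\<lambda>(i, a) (i', a'). M i i') x y * v y)
       = (\<Sum>i\<in>I. \<Sum>j\<in>I. cnj (v (i,0)) * M i j * v (j,0))"
      by (simp only: sum_times_one prod.case)
    then show ?thesis using q[of "\<lambda>i. v (i, 0)"] by simp
  qed
  show ?thesis unfolding psd_def by (rule conjI[OF herm allI[OF qq]])
qed

lemma psd_unlift:
  assumes "psd (I \<times> {..<Suc 0}) (\<lambda>(p, a) (q, a'). A p q)"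
  shows "0 \<le> Re (qf I w A)"
proof -
  have "0 \<le> Re (\<Sum>x\<in>I \<times> {..<Suc 0}. \<Sum>y\<in>I \<times> {..<Suc 0}. cnj ((\<lambda>(f, _). w f) x) * (case x of (p, a) \<Rightarrow> \<lambda>(q, a'). A p q) y * (\<lambda>(f, _). w f) y)"
    using assms unfolding psd_def by blast
  then show ?thesis unfolding sum_times_one qf_def by simp
qed

lemma channel_zero:
  assumes "channel In Out \<Psi>" "p \<in> Out" "q \<in> Out"
  shows "\<Psi> (\<lambda>i i'. 0) p q = 0"
proof -
  have "\<Psi> (\<lambda>i i'. 0 * A i i') p q = 0 * \<Psi> A p q" for A
    using assms unfolding channel_def by blast
  then show ?thesis by simp
qed

lemma channel_sum:
  assumes ch: "channel In Out \<Psi>" and pq: "p \<in> Out" "q \<in> Out" and fin: "finite F"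
  shows "\<Psi> (\<lambda>i i'. \<Sum>j\<in>F. G j i i') p q = (\<Sum>j\<in>F. \<Psi> (G j) p q)"
  using fin
proof (induction F rule: finite_induct)
  case empty
  then show ?case using channel_zero[OF ch pq] by simp
next
  case (insert x F)
  have add: "\<Psi> (\<lambda>i i'. A i i' + B i i') p q = \<Psi> A p q + \<Psi> B p q" for A B
    using ch pq unfolding channel_def by blast
  have "\<Psi> (\<lambda>i i'. \<Sum>j\<in>insert x F. G j i i') p q = \<Psi> (\<lambda>i i'. G x i i' + (\<Sum>j\<in>F. G j i i')) p q"
    using insert by simp
  also have "\<dots> = \<Psi> (G x) p q + \<Psi> (\<lambda>i i'. \<Sum>j\<in>F. G j i i') p q"
    by (rule add[of "G x" "\<lambda>i i'. \<Sum>j\<in>F. G j i i'", simplified])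
  finally show ?case using insert by simp
qed

lemma channel_comb:
  assumes ch: "channel In Out \<Psi>" and pq: "p \<in> Out" "q \<in> Out" and fin: "finite F"
  shows "\<Psi> (\<lambda>i i'. c * A i i' - (\<Sum>j\<in>F. b j * G j i i')) p q = c * \<Psi> A p q - (\<Sum>j\<in>F. b j * \<Psi> (G j) p q)"
proof -
  have add: "\<Psi> (\<lambda>i i'. A i i' + B i i') p q = \<Psi> A p q + \<Psi> B p q" for A B
    using ch pq unfolding channel_def by blast
  have sm: "\<Psi> (\<lambda>i i'. c * A i i') p q = c * \<Psi> A p q" for c A
    using ch pq unfolding channel_def by blast
  have "\<Psi> (\<lambda>i i'. c * A i i' - (\<Sum>j\<in>F. b j * G j i i')) p q
      = \<Psi> (\<lambda>i i'. (\<lambda>i i'. c * A i i') i i' + (\<lambda>i i'. (-1) * (\<Sum>j\<in>F. b j * G j i i')) i i') p q"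
    by simp
  also have "\<dots> = c * \<Psi> A p q + (-1) * \<Psi> (\<lambda>i i'. \<Sum>j\<in>F. b j * G j i i') p q"
    unfolding add sm[of c A] sm[of "-1" "\<lambda>i i'. \<Sum>j\<in>F. b j * G j i i'"] ..
  also have "\<Psi> (\<lambda>i i'. \<Sum>j\<in>F. b j * G j i i') p q = (\<Sum>j\<in>F. \<Psi> (\<lambda>i i'. b j * G j i i') p q)"
    by (rule channel_sum[OF ch pq fin])
  also have "\<dots> = (\<Sum>j\<in>F. b j * \<Psi> (G j) p q)"
    by (intro sum.cong refl) (rule sm)
  finally show ?thesis by simp
qed



lemma inner_self: "inner_d d v v = complex_of_real (nrm2 d v)"
  unfolding inner_d_def by (rule nrm2_sum')

lemma nrm2_nonneg: "0 \<le> nrm2 d v"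
  unfolding nrm2_def by (simp add: sum_nonneg)

lemma key_psd:
  assumes d: "d \<ge> 2" and fS: "finite S" and nr: "\<And>j. j \<in> S \<Longrightarrow> nrm2 d (w j) = 1"
    and unb: "\<And>j k. j \<in> S \<Longrightarrow> k \<in> S \<Longrightarrow> j \<noteq> k \<Longrightarrow> (cmod (inner_d d (w j) (w k)))\<^sup>2 = 1 / real d"
    and Tdef: "T = (\<Sum>j\<in>S. (t j)\<^sup>2)"
  shows "psd {..<d} (\<lambda>p q. complex_of_real ((1 - 1 / real d) * sqrt T) * (if p = q then 1 else 0)
            - (\<Sum>j\<in>S. complex_of_real (t j) * xm d (w j) p q))"
proof -
  define c where "c = 1 - 1 / real d"
  have d0: "d > 0" using d by simp
  have c0: "c \<ge> 0" unfolding c_def using d by (simp add: field_simps)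
  have T0: "T \<ge> 0" unfolding Tdef by (simp add: sum_nonneg)
  define Z where "Z = (\<lambda>p q. \<Sum>j\<in>S. complex_of_real (t j) * xm d (w j) p q)"
  define M where "M = (\<lambda>p q. complex_of_real (c * sqrt T) * (if p = q then 1 else 0) - Z p q)"
  have herm: "\<forall>p\<in>{..<d}. \<forall>q\<in>{..<d}. M q p = cnj (M p q)"
  proof (intro ballI)
    fix p q
    have "cnj (xm d (w j) p q) = xm d (w j) q p" for j using xm_herm[of d "w j" p q] by simp
    then show "M q p = cnj (M p q)" unfolding M_def Z_def by auto
  qed
  have trZ: "tr {..<d} Z = 0"
  proof -
    have "tr {..<d} Z = (\<Sum>j\<in>S. complex_of_real (t j) * tr {..<d} (xm d (w j)))"
      unfolding tr_def Z_def by (subst sum.swap) (simp add: sum_distrib_left)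
    then show ?thesis using tr_xm[OF d0] by simp
  qed
  have ipw: "ip2 d (xm d (w j)) (xm d (w k)) = (if j = k then complex_of_real c else 0)" if "j \<in> S" "k \<in> S" for j k
  proof (cases "j = k")
    case True
    then show ?thesis using ip2_xm[OF d0] nr that inner_self[of d "w k"] by (simp add: c_def)
  next
    case False
    have "ip2 d (xm d (w j)) (xm d (w k)) = complex_of_real ((cmod (inner_d d (w k) (w j)))\<^sup>2 - nrm2 d (w k) * nrm2 d (w j) / real d)"
      by (rule ip2_xm[OF d0])
    moreover have "(cmod (inner_d d (w k) (w j)))\<^sup>2 = 1 / real d" using unb[of k j] that False by simp
    ultimately show ?thesis using nr that False by simp
  qed
  have ZZ: "ip2 d Z Z = complex_of_real (c * T)"
  proof -
    have "ip2 d Z Z = (\<Sum>j\<in>S. \<Sum>k\<in>S. cnj (complex_of_real (t j)) * complex_of_real (t k) * ip2 d (xm d (w j)) (xm d (w k)))"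
      unfolding Z_def by (rule ip2_lin)
    also have "\<dots> = (\<Sum>j\<in>S. \<Sum>k\<in>S. if j = k then complex_of_real (c * (t j)\<^sup>2) else 0)"
      by (intro sum.cong refl) (simp add: ipw power2_eq_square)
    also have "\<dots> = (\<Sum>j\<in>S. complex_of_real (c * (t j)\<^sup>2))"
      using fS by (intro sum.cong refl) simp
    also have "\<dots> = complex_of_real (c * T)"
      unfolding Tdef by (simp add: sum_distrib_left)
    finally show ?thesis .
  qed
  have qfpos: "0 \<le> Re (\<Sum>i<d. \<Sum>j<d. cnj (v i) * M i j * v j)" for v
  proof -
    let ?n = "nrm2 d v"
    have n0: "?n \<ge> 0" by (rule nrm2_nonneg)
    have qM: "qf {..<d} v M = complex_of_real (c * sqrt T) * complex_of_real ?n - qf {..<d} v Z"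
    proof -
      have "M = (\<lambda>p q. (if p = q then complex_of_real (c * sqrt T) else 0) - Z p q)"
        unfolding M_def by (intro ext) simp
      then show ?thesis by (simp add: qf_diff qf_diag)
    qed
    have qZ: "qf {..<d} v Z = ip2 d (xm d v) Z"
      using ip2_xm_left[of d v Z] trZ by simp
    have vv: "ip2 d (xm d v) (xm d v) = complex_of_real (c * ?n\<^sup>2)"
      using ip2_xm[OF d0, of v v] inner_self[of d v] n0 by (simp add: c_def power2_eq_square field_simps)
    have "Re (qf {..<d} v Z) \<le> cmod (ip2 d (xm d v) Z)"
      unfolding qZ by (rule complex_Re_le_cmod)
    also have "\<dots> \<le> sqrt (Re (ip2 d (xm d v) (xm d v))) * sqrt (Re (ip2 d Z Z))"
      unfolding ip2_def by (rule ip_CS)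
    also have "\<dots> = sqrt (c * ?n\<^sup>2) * sqrt (c * T)"
      unfolding vv ZZ by simp
    also have "\<dots> = c * sqrt T * ?n"
      using c0 T0 n0 by (simp add: real_sqrt_mult)
    finally have "Re (qf {..<d} v Z) \<le> c * sqrt T * ?n" .
    then have "0 \<le> Re (qf {..<d} v M)" unfolding qM by simp
    then show ?thesis unfolding qf_def .
  qed
  have "psd {..<d} M" unfolding psd_def using herm qfpos by blast
  then show ?thesis unfolding M_def Z_def c_def .
qed



lemma main_incompat:
  assumes d: "d \<ge> 2" and fS: "finite S" and mub: "mub_family d (card S) B"
    and T1: "(\<Sum>i\<in>S. (t i)\<^sup>2) > 1"
  shows "\<not> compatible d S (\<lambda>i. depol d (t i))"
proof
  assume "compatible d S (\<lambda>i. depol d (t i))"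
  then obtain \<Psi> where ch: "channel {..<d} (tens_idx d S) \<Psi>"
    and marg: "\<forall>j\<in>S. \<forall>A. \<forall>p<d. \<forall>q<d. marginal d S j (\<Psi> A) p q = depol d (t j) A p q"
    unfolding compatible_def by blast
  obtain \<beta> where bij: "bij_betw \<beta> S {0..<card S}" using ex_bij_betw_finite_nat[OF fS] by blast
  define bb where "bb = (\<lambda>j. B (\<beta> j))"
  have d0: "d > 0" using d by simp
  have onbS: "onb d (bb k)" if "k \<in> S" for k
  proof -
    have "\<beta> k < card S" using bij that unfolding bij_betw_def by auto
    then show ?thesis using mub unfolding mub_family_def bb_def by auto
  qed
  have unbS: "unbiased d (bb j) (bb k)" if "j \<in> S" "k \<in> S" "j \<noteq> k" for j k
  proof -
    have "\<beta> j < card S" "\<beta> k < card S" using bij that unfolding bij_betw_def by auto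
    moreover have "\<beta> j \<noteq> \<beta> k" using bij that unfolding bij_betw_def inj_on_def by auto
    ultimately show ?thesis using mub unfolding mub_family_def bb_def by auto
  qed
  define T where "T = (\<Sum>i\<in>S. (t i)\<^sup>2)"
  define c where "c = 1 - 1 / real d"
  define c' where "c' = c * sqrt T"
  let ?TI = "tens_idx d S"
  define Id :: "nat op" where "Id = (\<lambda>p q. if p = q then 1 else 0)"
  define Ma where "Ma = (\<lambda>a p q. complex_of_real c' * Id p q - (\<Sum>j\<in>S. complex_of_real (t j) * xm d (bb j (a j)) p q))"
  have psdM: "psd {..<d} (Ma a)" if a: "a \<in> ?TI" for a
  proof -
    have "psd {..<d} (\<lambda>p q. complex_of_real ((1 - 1 / real d) * sqrt T) * (if p = q then 1 else 0)
            - (\<Sum>j\<in>S. complex_of_real (t j) * xm d (bb j (a j)) p q))"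
    proof (rule key_psd[OF d fS _ _ T_def])
      fix j assume "j \<in> S"
      then show "nrm2 d (bb j (a j)) = 1" using onb_nrm2 onbS tens_idx_lt a by blast
    next
      fix j k assume jk: "j \<in> S" "k \<in> S" "j \<noteq> k"
      then have "cmod (inner_d d (bb j (a j)) (bb k (a k))) = 1 / sqrt (real d)"
        using unbS[OF jk] tens_idx_lt a unfolding unbiased_def by blast
      then show "(cmod (inner_d d (bb j (a j)) (bb k (a k))))\<^sup>2 = 1 / real d"
        by (simp add: power_divide)
    qed
    then show ?thesis unfolding Ma_def Id_def c'_def c_def by simp
  qed
  have CP0: "\<forall>(n::nat) (X :: (nat \<times> nat) op). psd ({..<d} \<times> {..<n}) X \<longrightarrow>
        psd (?TI \<times> {..<n}) (\<lambda>(p,a) (q,a'). \<Psi> (\<lambda>i i'. X (i,a) (i',a')) p q)"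
    using ch unfolding channel_def by (elim conjE)
  note CP = CP0[rule_format]
  have pos: "0 \<le> Re (qf ?TI (phi S bb a) (\<Psi> (Ma a)))" if a: "a \<in> ?TI" for a
  proof -
    have "psd (?TI \<times> {..<Suc 0}) (\<lambda>(p,b) (q,b'). \<Psi> (\<lambda>i i'. (\<lambda>(i, u) (i', u'). Ma a i i') (i,b) (i',b')) p q)"
      by (rule CP[OF psd_lift[OF psdM[OF a]]])
    then have "psd (?TI \<times> {..<Suc 0}) (\<lambda>(p,b) (q,b'). \<Psi> (Ma a) p q)"
      by simp
    then show ?thesis by (rule psd_unlift)
  qed
  have lin: "\<Psi> (Ma a) f g = complex_of_real c' * \<Psi> Id f g - (\<Sum>j\<in>S. complex_of_real (t j) * \<Psi> (xm d (bb j (a j))) f g)"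
    if "f \<in> ?TI" "g \<in> ?TI" for a f g
    unfolding Ma_def by (rule channel_comb[OF ch that fS])
  have qfsplit: "qf ?TI (phi S bb a) (\<Psi> (Ma a)) = complex_of_real c' * qf ?TI (phi S bb a) (\<Psi> Id)
      - (\<Sum>j\<in>S. complex_of_real (t j) * qf ?TI (phi S bb a) (\<Psi> (xm d (bb j (a j)))))" for a
  proof -
    have "qf ?TI (phi S bb a) (\<Psi> (Ma a)) = qf ?TI (phi S bb a) (\<lambda>f g. complex_of_real c' * \<Psi> Id f g - (\<Sum>j\<in>S. complex_of_real (t j) * \<Psi> (xm d (bb j (a j))) f g))"
      by (rule qf_cong) (rule lin)
    then show ?thesis by (simp only: qf_diff qf_smul qf_lin)
  qed
  have fTI: "finite ?TI" unfolding tens_idx_def using fS by (simp add: finite_PiE)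
  have trI: "(\<Sum>a\<in>?TI. qf ?TI (phi S bb a) (\<Psi> Id)) = of_nat d"
  proof -
    have "(\<Sum>a\<in>?TI. qf ?TI (phi S bb a) (\<Psi> Id)) = tr ?TI (\<Psi> Id)"
      by (rule qf_trace[OF fS onbS])
    also have "\<dots> = tr {..<d} Id" using ch unfolding channel_def by blast
    also have "\<dots> = of_nat d" unfolding tr_def Id_def by simp
    finally show ?thesis .
  qed
  have partj: "(\<Sum>a\<in>?TI. qf ?TI (phi S bb a) (\<Psi> (xm d (bb j (a j))))) = complex_of_real (t j * (real d - 1))"
    if j: "j \<in> S" for j
  proof -
    have "(\<Sum>a\<in>?TI. qf ?TI (phi S bb a) (\<Psi> (xm d (bb j (a j)))))
        = (\<Sum>x<d. qf {..<d} (bb j x) (marginal d S j (\<Psi> (xm d (bb j x)))))"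
      by (rule qf_marg[OF fS onbS j, where Y="\<lambda>x. \<Psi> (xm d (bb j x))"])
    also have "\<dots> = (\<Sum>x<d. qf {..<d} (bb j x) (depol d (t j) (xm d (bb j x))))"
      by (intro sum.cong refl qf_cong) (use marg j in auto)
    also have "\<dots> = (\<Sum>x<d. complex_of_real (t j * (1 - 1 / real d)))"
    proof (intro sum.cong refl)
      fix x assume x: "x \<in> {..<d}"
      have nx: "nrm2 d (bb j x) = 1" using onb_nrm2 onbS j x by blast
      have "depol d (t j) (xm d (bb j x)) = (\<lambda>p q. complex_of_real (t j) * xm d (bb j x) p q)"
        unfolding depol_def using tr_xm[OF d0] by (intro ext) simp
      then have "qf {..<d} (bb j x) (depol d (t j) (xm d (bb j x))) = complex_of_real (t j) * qf {..<d} (bb j x) (xm d (bb j x))"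
        by (simp only: qf_smul)
      also have "qf {..<d} (bb j x) (xm d (bb j x)) = complex_of_real (1 - 1 / real d)"
        using qf_xm[of d "bb j x" "bb j x"] inner_self[of d "bb j x"] nx by simp
      finally show "qf {..<d} (bb j x) (depol d (t j) (xm d (bb j x))) = complex_of_real (t j * (1 - 1 / real d))"
        by simp
    qed
    also have "\<dots> = complex_of_real (t j * (real d - 1))"
      using d0 by (simp add: field_simps)
    finally show ?thesis .
  qed
  have total: "(\<Sum>a\<in>?TI. qf ?TI (phi S bb a) (\<Psi> (Ma a))) = complex_of_real (c' * real d - (real d - 1) * T)"
  proof -
    have "(\<Sum>a\<in>?TI. qf ?TI (phi S bb a) (\<Psi> (Ma a)))
        = complex_of_real c' * (\<Sum>a\<in>?TI. qf ?TI (phi S bb a) (\<Psi> Id))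
          - (\<Sum>j\<in>S. complex_of_real (t j) * (\<Sum>a\<in>?TI. qf ?TI (phi S bb a) (\<Psi> (xm d (bb j (a j))))))"
      unfolding qfsplit sum_subtractf by (simp add: sum_distrib_left sum.swap[of _ S])
    also have "\<dots> = complex_of_real c' * of_nat d - (\<Sum>j\<in>S. complex_of_real (t j) * complex_of_real (t j * (real d - 1)))"
      using partj by (simp add: trI)
    also have "\<dots> = complex_of_real (c' * real d - (real d - 1) * T)"
      unfolding T_def by (simp add: sum_distrib_left power2_eq_square mult_ac)
    finally show ?thesis .
  qed
  have "0 \<le> Re (\<Sum>a\<in>?TI. qf ?TI (phi S bb a) (\<Psi> (Ma a)))"
    unfolding Re_sum by (rule sum_nonneg) (rule pos)
  then have ge: "0 \<le> c' * real d - (real d - 1) * T" unfolding total by simp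
  have "c' * real d = (real d - 1) * sqrt T" unfolding c'_def c_def using d0 by (simp add: field_simps)
  moreover have "sqrt T < T"
  proof -
    have T1': "T > 1" using T1 unfolding T_def .
    then have "1 < sqrt T" by simp
    then have "sqrt T * 1 < sqrt T * sqrt T" by (intro mult_strict_left_mono) auto
    then show ?thesis using T1' by simp
  qed
  moreover have "real d - 1 > 0" using d by simp
  ultimately show False using ge
    by (smt (verit) mult_strict_left_mono)
qed


theorem corollary7p2:
  fixes d N K :: nat and t :: "nat \<Rightarrow> real"
  assumes "d \<ge> 2"
    and "\<forall>i\<in>{1..N}. 0 \<le> t i \<and> t i \<le> 1"
    and "0 < K" and "K \<le> N" and "K \<le> D d"
  shows "((\<exists>S. S \<subseteq> {1..N} \<and> card S = K \<and> (\<Sum>i\<in>S. (t i)\<^sup>2) > 1)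
            \<longrightarrow> NK_incompatible d N K (\<lambda>i. depol d (t i))) \<and>
         ((\<forall>S. S \<subseteq> {1..N} \<and> card S = K \<longrightarrow> (\<Sum>i\<in>S. (t i)\<^sup>2) > 1)
            \<longrightarrow> NK_strongly_incompatible d N K (\<lambda>i. depol d (t i)))"
proof -
  obtain B where mub: "mub_family d K B" using mub_exists[OF assms(1) assms(5)] by blast
  have key: "\<not> compatible d S (\<lambda>i. depol d (t i))"
    if "S \<subseteq> {1..N}" "card S = K" "(\<Sum>i\<in>S. (t i)\<^sup>2) > 1" for S
  proof -
    have "finite S" using that(1) finite_subset by blast
    then show ?thesis using main_incompat[OF assms(1), of S B t] mub that by simp
  qed
  show ?thesis
    unfolding NK_incompatible_def NK_strongly_incompatible_def using key by blast
qed

end
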